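(* Let $x=(x_1,\dots,x_n)$ be a stochastic vector ($x_j\ge0$, $\sum_j x_j=1$) and let $P(x)=\prod_{k=1}^n(1-x_k)^{1-x_k}$. Then (i) $\max_j x_j/P(x)\le e^{1/e}$; (ii) $\sum_{j=1}^n\psi_a\!\Big(\dfrac{x_j}{2\,P(x)}\Big)\le 1$, where $\psi_a(t)=1-(1-t)a^t$ and $a$ is the unique positive root of $\frac{1-\ln a}{a}=\frac1e$.
   Context: Convention: $0^0=1$. *)

theory Defs
  imports Complex_Main
begin

text \<open>Real power with the convention 0^0 = 1 (Isabelle's powr has 0 powr 0 = 0).\<close>
definition pow0 :: "real \<Rightarrow> real \<Rightarrow> real" where
  "pow0 b e = (if b = 0 then (if e = 0 then 1 else 0) else b powr e)"

definition Pfun :: "nat \<Rightarrow> (nat \<Rightarrow> real) \<Rightarrow> real" where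
  "Pfun n x = (\<Prod>k\<in>{1..n}. pow0 (1 - x k) (1 - x k))"

definition psi :: "real \<Rightarrow> real \<Rightarrow> real" where
  "psi a t = 1 - (1 - t) * a powr t"

end

theory Submission imports Defs "HOL-Analysis.Analysis" begin

lemma exp_low4: assumes "0 \<le> (x::real)" shows "1 + x + x^2/2 + x^3/6 + x^4/24 \<le> exp x"
proof -
  obtain t where t: "exp x = (\<Sum>m<5. x^m / fact m) + exp t / fact 5 * x^5"
    using Maclaurin_exp_le[of x 5] by blast
  have "0 \<le> exp t / fact 5 * x^5" using assms by simp
  moreover have "(\<Sum>m<5. x^m / fact m) = 1 + x + x^2/2 + x^3/6 + x^4/24"
    by (simp add: eval_nat_numeral fact_numeral)
  ultimately show ?thesis using t by linarith
qed

lemma exp_neg_low: assumes "0 \<le> (x::real)" shows "1 - x + x^2/2 - x^3/6 \<le> exp (-x)"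
proof -
  obtain t where t: "exp (-x) = (\<Sum>m<4. (-x)^m / fact m) + exp t / fact 4 * (-x)^4"
    using Maclaurin_exp_le[of "-x" 4] by blast
  have "0 \<le> exp t / fact 4 * (-x)^4" by simp
  moreover have "(\<Sum>m<4. (-x)^m / fact m) = 1 - x + x^2/2 - x^3/6"
    by (simp add: eval_nat_numeral fact_numeral)
  ultimately show ?thesis using t by linarith
qed

lemma e_low: "65/24 \<le> exp (1::real)"
  using exp_low4[of 1] by simp

lemma a_bounds:
  fixes a :: real
  assumes a_pos: "a > 0" and a_root: "(1 - ln a) / a = 1 / exp 1"
  shows "21/50 \<le> ln a" "ln a < 1"
proof -
  have q: "(1 - ln a) / a > 0" using a_root by simp
  then show "ln a < 1" using a_pos by (simp add: zero_less_divide_iff)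
  have a153: "a \<ge> 153/100"
  proof (rule ccontr)
    assume "\<not> a \<ge> 153/100"
    hence alt: "a < 153/100" by simp
    have "exp (43/100::real) \<ge> 153/100" using exp_low4[of "43/100"] by (simp add: eval_nat_numeral)
    hence "a < exp (43/100)" using alt by simp
    hence "ln a < 43/100" using a_pos by (metis ln_exp ln_less_cancel_iff exp_gt_zero)
    hence "(1 - ln a) / a > (57/100) / a" using a_pos by (intro divide_strict_right_mono) auto
    moreover have "(57/100) / a > (57/100) / (153/100)" using a_pos alt
      by (intro divide_strict_left_mono) auto
    moreover have "1 / exp 1 \<le> 1 / (65/24::real)" using e_low by (intro divide_left_mono) auto
    ultimately show False using a_root by simp
  qed
  have "exp (-(21/50::real)) \<ge> 1 - 21/50 + (21/50)^2/2 - (21/50)^3/6" by (rule exp_neg_low) simp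
  hence "exp (-(21/50::real)) \<ge> 100/153" by (simp add: eval_nat_numeral)
  hence "1 / exp (-(21/50::real)) \<le> 1 / (100/153)" by (intro divide_left_mono) auto
  moreover have "exp (21/50::real) = 1 / exp (-(21/50::real))" by (metis exp_minus_inverse mult.commute divide_eq_eq exp_not_eq_zero mult_1)
  ultimately have "exp (21/50::real) \<le> 153/100" by simp
  hence "exp (21/50) \<le> a" using a153 by simp
  thus "21/50 \<le> ln a" using ln_ge_iff[OF a_pos] by blast
qed

lemma psi_eq: "a > 0 \<Longrightarrow> psi a = (\<lambda>t. 1 - (1 - t) * exp (t * ln a))"
  by (auto simp: psi_def powr_def)

lemma psi_convex:
  fixes a :: real
  assumes "a > 0" "0 \<le> ln a" "ln a \<le> 1"
  shows "convex_on {0..1} (psi a)"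
proof -
  define L where "L = ln a"
  have "convex_on {0..1} (\<lambda>t. 1 - (1 - t) * exp (t * L))"
  proof (rule f''_ge0_imp_convex[where f' = "\<lambda>t. exp (t*L) * (1 - (1-t)*L)"
        and f'' = "\<lambda>t. exp (t*L) * L * (2 - (1-t)*L)"])
    show "convex {0..(1::real)}" by simp
    fix t :: real
    show "((\<lambda>t. 1 - (1 - t) * exp (t * L)) has_real_derivative exp (t*L) * (1 - (1-t)*L)) (at t)"
      by (auto intro!: derivative_eq_intros simp: algebra_simps)
    show "((\<lambda>t. exp (t*L) * (1 - (1-t)*L)) has_real_derivative exp (t*L) * L * (2 - (1-t)*L)) (at t)"
      by (auto intro!: derivative_eq_intros simp: algebra_simps)
    assume "t \<in> {0..1}"
    hence "(1-t)*L \<le> 1" using assms unfolding L_def by (auto intro: mult_le_one)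
    thus "0 \<le> exp (t*L) * L * (2 - (1-t)*L)" using assms unfolding L_def by auto
  qed
  thus ?thesis using psi_eq[OF assms(1)] L_def by simp
qed

lemma psi_chord:
  fixes a :: real
  assumes "a > 0" "0 \<le> ln a" "ln a \<le> 1" "0 \<le> t" "t \<le> s" "s \<le> 1" "0 < s"
  shows "psi a t \<le> t / s * psi a s"
proof -
  have c: "convex_on {0..1} (psi a)" using psi_convex assms by blast
  have "psi a ((1 - t/s) *\<^sub>R 0 + (t/s) *\<^sub>R s) \<le> (1 - t/s) * psi a 0 + (t/s) * psi a s"
    using convex_onD[OF c, of "t/s" 0 s] assms by auto
  moreover have "psi a 0 = 0" using assms by (simp add: psi_def)
  ultimately show ?thesis using assms by simp
qed

lemma pow0_exp: assumes "0 \<le> t" "t \<le> 1" shows "exp (-t) \<le> pow0 (1-t) (1-t)"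
proof (cases "t = 1")
  case True thus ?thesis by (simp add: pow0_def)
next
  case False
  hence pos: "1 - t > 0" using assms by simp
  have "ln (1/(1-t)) \<le> 1/(1-t) - 1" using pos by (intro ln_le_minus_one) simp
  hence "- ln (1-t) \<le> 1/(1-t) - 1" using pos by (simp add: ln_div)
  hence "(1-t) * (- ln (1-t)) \<le> (1-t) * (1/(1-t) - 1)" using pos by (intro mult_left_mono) auto
  hence "-t \<le> (1-t) * ln (1-t)" using pos by (simp add: algebra_simps)
  thus ?thesis using pos by (simp add: pow0_def powr_def)
qed

lemma pow0_pos: "0 \<le> y \<Longrightarrow> 0 < pow0 y y"
  by (auto simp: pow0_def)

lemma pow0_low: assumes "0 \<le> y" "y \<le> 1" shows "exp (-1/exp 1) \<le> pow0 y y"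
proof (cases "y = 0")
  case True thus ?thesis by (simp add: pow0_def)
next
  case False
  hence pos: "y > 0" using assms by simp
  have "ln ((1/y) / exp 1) \<le> (1/y) / exp 1 - 1" using pos by (intro ln_le_minus_one) simp
  hence "- ln y - 1 \<le> (1/y) / exp 1 - 1" using pos by (simp add: ln_div ln_mult)
  hence "y * (- ln y) \<le> y * ((1/y) / exp 1)" using pos by (intro mult_left_mono) auto
  hence "-1/exp 1 \<le> y * ln y" using pos by simp
  thus ?thesis using pos by (simp add: pow0_def powr_def)
qed

lemma ln_lower: fixes y :: real assumes "0 < y" "y \<le> 1" shows "(y - 1/y)/2 \<le> ln y"
proof -
  define phi where "phi x = ln x - (x - 1/x)/2" for x :: real
  have "phi 1 \<le> phi y"
  proof (rule DERIV_nonpos_imp_nonincreasing[OF assms(2)])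
    fix x :: real assume x: "y \<le> x" "x \<le> 1"
    hence xp: "x > 0" using assms by simp
    have "DERIV phi x :> 1/x - (1 + 1/x^2)/2" unfolding phi_def using xp
      by (auto intro!: derivative_eq_intros simp: power2_eq_square field_simps)
    moreover have "1/x - (1 + 1/x^2)/2 = - ((x - 1)^2 / (2*x^2))" using xp
      by (simp add: field_simps power2_eq_square)
    moreover have "(x - 1)^2 / (2*x^2) \<ge> 0" by simp
    ultimately show "\<exists>d. DERIV phi x :> d \<and> d \<le> 0" by (intro exI[of _ "1/x - (1 + 1/x^2)/2"]) auto
  qed
  thus ?thesis by (simp add: phi_def)
qed

lemma pow0_low2: assumes "0 \<le> y" "y \<le> 1" shows "exp ((1-y)^2/2 - 1) \<le> pow0 y y * exp (-y)"
proof (cases "y = 0")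
  case True thus ?thesis by (simp add: pow0_def)
next
  case False
  hence pos: "y > 0" using assms by simp
  have "y * ((y - 1/y)/2) \<le> y * ln y" using ln_lower[OF pos assms(2)] pos by (intro mult_left_mono) auto
  moreover have "y * ((y - 1/y)/2) = (y^2 - 1)/2" using pos by (simp add: field_simps power2_eq_square)
  moreover have "(1-y)^2/2 - 1 = (y^2 - 1)/2 - y" by (simp add: field_simps power2_eq_square)
  ultimately have "(1-y)^2/2 - 1 \<le> y * ln y + - y" by linarith
  hence "exp ((1-y)^2/2 - 1) \<le> exp (y * ln y + - y)" by simp
  also have "\<dots> = exp (y * ln y) * exp (-y)" by (rule exp_add)
  also have "\<dots> = pow0 y y * exp (-y)" using pos by (simp add: pow0_def powr_def mult.commute)
  finally show ?thesis .
qed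


definition KK :: "real \<Rightarrow> real" where
 "KK m = 16500000 - 47945100*m + 38229436*m^2 - 23972550*m^3 + 43187500*m^4 + 9765625*m^6"

lemma KK_nonneg: assumes "0 \<le> m" "m \<le> 1" shows "0 \<le> KK m"
proof (cases "m \<le> 1/2")
  case True
  define s where "s = 2*m"
  have s: "0 \<le> s" "s \<le> 1" using assms True by (auto simp: s_def)
  have "64 * KK m = (1056000000)* s^0 + (-1534243200)* s^1 + (611670976)* s^2 + (-191780400)* s^3 + (172750000)* s^4 + (9765625)* s^6"
    unfolding KK_def s_def by (simp add: algebra_simps eval_nat_numeral)
  also have "\<dots> = 1056000000 * s^0*(1-s)^6 + 4801756800 * s^1*(1-s)^5 + 8780454976 * s^2*(1-s)^4 + 8032471504 * s^3*(1-s)^3 + 3765002656 * s^4*(1-s)^2 + 881626704 * s^5*(1-s)^1 + 124163001 * s^6*(1-s)^0"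
    by (simp add: algebra_simps eval_nat_numeral)
  also have "\<dots> \<ge> 0" using s by (intro add_nonneg_nonneg mult_nonneg_nonneg zero_le_power) auto
  finally show ?thesis by simp
next
  case False
  define s where "s = 2*m - 1"
  have s: "0 \<le> s" "s \<le> 1" using assms False by (auto simp: s_def)
  have "64 * KK m = (124163001)* s^0 + (-136648698)* s^1 + (1219314151)* s^2 + (694532100)* s^3 + (319234375)* s^4 + (58593750)* s^5 + (9765625)* s^6"
    unfolding KK_def s_def by (simp add: algebra_simps eval_nat_numeral)
  also have "\<dots> = 124163001 * s^0*(1-s)^6 + 608329308 * s^1*(1-s)^5 + 2398515676 * s^2*(1-s)^4 + 6688561744 * s^3*(1-s)^3 + 10214673616 * s^4*(1-s)^2 + 7719649920 * s^5*(1-s)^1 + 2288954304 * s^6*(1-s)^0"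
    by (simp add: algebra_simps eval_nat_numeral)
  also have "\<dots> \<ge> 0" using s by (intro add_nonneg_nonneg mult_nonneg_nonneg zero_le_power) auto
  finally show ?thesis by simp
qed

lemma poly_main:
  fixes m :: real
  assumes "0 \<le> m" "m \<le> 1"
  shows "(29/50) * (68/25*m/(2+m^2)) + (1659/5000) * (68/25*m/(2+m^2))^2 + (441/5000) * (68/25*m/(2+m^2))^3 \<le> m"
proof -
  define D where "D = 2 + m^2"
  have Dp: "D > 0" unfolding D_def by (simp add: add_pos_nonneg)
  define Y where "Y = 15406250*D^2 + 23972550*m*D + 17333064*m^2"
  have "9765625 * D^3 - Y = KK m" unfolding Y_def D_def KK_def by (simp add: algebra_simps eval_nat_numeral)
  hence X: "Y \<le> 9765625 * D^3" using KK_nonneg[OF assms] by simp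
  have "(29/50) * (68/25*m/D) + (1659/5000) * (68/25*m/D)^2 + (441/5000) * (68/25*m/D)^3 = m * Y / (9765625 * D^3)"
    unfolding Y_def using Dp by (simp add: field_simps eval_nat_numeral)
  also have "\<dots> \<le> m * (9765625 * D^3) / (9765625 * D^3)" using X assms Dp by (intro divide_right_mono mult_left_mono) auto
  also have "\<dots> = m" using Dp by simp
  finally show ?thesis unfolding D_def .
qed


theorem lemma4p3:
  fixes n :: nat and x :: "nat \<Rightarrow> real" and a :: real
  assumes nonneg: "\<forall>j\<in>{1..n}. x j \<ge> 0"
    and stoch: "(\<Sum>j\<in>{1..n}. x j) = 1"
    and a_pos: "a > 0"
    and a_root: "(1 - ln a) / a = 1 / exp 1"
  shows "Max (x ` {1..n}) / Pfun n x \<le> exp (1 / exp 1)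
    \<and> (\<Sum>j\<in>{1..n}. psi a (x j / (2 * Pfun n x))) \<le> 1"
proof -
  define S where "S = {1..n}"
  have fin: "finite S" by (simp add: S_def)
  have ne: "S \<noteq> {}" using stoch unfolding S_def by (metis sum.empty zero_neq_one)
  have xle: "x j \<le> 1" if "j \<in> S" for j
  proof -
    have "x j \<le> (\<Sum>k\<in>S. x k)" using that fin nonneg unfolding S_def
      by (intro member_le_sum) auto
    thus ?thesis using stoch S_def by simp
  qed
  have xge: "0 \<le> x j" if "j \<in> S" for j using nonneg that S_def by auto
  define m where "m = Max (x ` S)"
  have "m \<in> x ` S" unfolding m_def using fin ne by (intro Max_in) auto
  then obtain j0 where j0: "j0 \<in> S" "x j0 = m" by auto
  have mge: "x j \<le> m" if "j \<in> S" for j unfolding m_def using fin that by (intro Max_ge) auto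
  have m1: "m \<le> 1" using xle j0 by auto
  have m0: "0 \<le> m" using xge j0 by auto
  have mpos: "0 < m"
  proof (rule ccontr)
    assume "\<not> 0 < m"
    hence "\<forall>j\<in>S. x j = 0" using mge xge m0 by force
    hence "(\<Sum>j\<in>S. x j) = 0" by simp
    thus False using stoch S_def by simp
  qed
  define f where "f t = pow0 (1 - t) (1 - t)" for t
  have P_eq: "Pfun n x = (\<Prod>k\<in>S. f (x k))" unfolding Pfun_def f_def S_def ..
  have split: "(\<Prod>k\<in>S. f (x k)) = f (x j0) * (\<Prod>k\<in>S - {j0}. f (x k))"
    using fin j0 by (simp add: prod.remove)
  have "(\<Prod>k\<in>S - {j0}. exp (- x k)) \<le> (\<Prod>k\<in>S - {j0}. f (x k))"
    using xge xle unfolding f_def by (intro prod_mono) (auto intro: pow0_exp)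
  moreover have "(\<Prod>k\<in>S - {j0}. exp (- x k)) = exp (\<Sum>k\<in>S - {j0}. - x k)"
    using fin by (simp add: exp_sum)
  moreover have "(\<Sum>k\<in>S - {j0}. - x k) = - (1 - m)"
  proof -
    have "(\<Sum>k\<in>S. x k) = x j0 + (\<Sum>k\<in>S - {j0}. x k)" using fin j0 by (simp add: sum.remove)
    thus ?thesis using stoch S_def j0 by (simp add: sum_negf)
  qed
  ultimately have rest: "exp (- (1 - m)) \<le> (\<Prod>k\<in>S - {j0}. f (x k))" by simp
  define y where "y = 1 - m"
  have y01: "0 \<le> y" "y \<le> 1" using m0 m1 mpos by (auto simp: y_def)
  have fm: "f (x j0) = pow0 y y" unfolding f_def y_def j0 ..
  define Lm where "Lm = pow0 y y * exp (-y)"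
  have Lm_pos: "0 < Lm" unfolding Lm_def using pow0_pos y01 by simp
  have PL: "Lm \<le> Pfun n x"
    unfolding P_eq split fm Lm_def using rest pow0_pos[OF y01(1)] y_def
    by (intro mult_left_mono) auto
  have Ppos: "0 < Pfun n x" using Lm_pos PL by linarith
  have MaxS: "Max (x ` {1..n}) = m" unfolding m_def S_def ..
  have part1: "m / Pfun n x \<le> exp (1 / exp 1)"
  proof -
    have "m \<le> exp (-y)" using exp_minus_ge[of y] y_def by simp
    have "m / Pfun n x \<le> m / Lm" using PL Lm_pos m0 by (intro divide_left_mono) auto
    also have "\<dots> \<le> exp (-y) / Lm" using \<open>m \<le> exp (-y)\<close> Lm_pos by (intro divide_right_mono) auto
    also have "\<dots> = 1 / pow0 y y" unfolding Lm_def using pow0_pos[OF y01(1)] by simp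
    also have "\<dots> \<le> 1 / exp (-1/exp 1)" using pow0_low[OF y01] pow0_pos[OF y01(1)] by (intro divide_left_mono) auto
    also have "\<dots> = exp (1 / exp 1)" by (metis exp_minus_inverse divide_eq_eq exp_not_eq_zero minus_divide_left mult.commute)
    finally show ?thesis .
  qed
  obtain L0: "21/50 \<le> ln a" and L1: "ln a < 1" using a_bounds[OF a_pos a_root] by blast
  have L0': "0 \<le> ln a" using L0 by linarith
  define E :: real where "E = 68/25"
  define D where "D = 2 + m^2"
  have Dp: "0 < D" unfolding D_def by (simp add: add_pos_nonneg)
  define Tb where "Tb = E * m / D"
  have Tbpos: "0 < Tb" unfolding Tb_def E_def using mpos Dp by simp
  have Tb1: "Tb \<le> 1"
  proof -
    have h: "(m - 34/25)^2 = m^2 - 68/25*m + 1156/625" by (simp add: power2_eq_square algebra_simps)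
    have "0 \<le> (m - 34/25)^2" by simp
    hence "E * m \<le> D" unfolding E_def D_def using h by linarith
    thus ?thesis unfolding Tb_def using Dp by simp
  qed
  have PD: "D / (2 * E) \<le> Pfun n x"
  proof -
    have "exp ((1-y)^2/2 - 1) \<le> Lm" unfolding Lm_def by (rule pow0_low2[OF y01])
    moreover have "exp ((1-y)^2/2 - 1) = exp (m^2/2) / exp 1" unfolding y_def by (simp add: exp_diff)
    moreover have "(1 + m^2/2) / exp 1 \<le> exp (m^2/2) / exp 1" by (intro divide_right_mono) auto
    moreover have "(1 + m^2/2) / E \<le> (1 + m^2/2) / exp 1" unfolding E_def using e_less_272
      by (intro divide_left_mono) (auto simp: add_nonneg_nonneg)
    moreover have "D / (2*E) = (1 + m^2/2) / E" unfolding D_def by (simp add: field_simps)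
    ultimately show ?thesis using PL by linarith
  qed
  have mTb: "m \<le> 2 * Pfun n x * Tb"
  proof -
    have "2 * (D / (2*E)) * Tb = m" unfolding Tb_def E_def using Dp by (simp add: field_simps)
    moreover have "2 * (D / (2*E)) * Tb \<le> 2 * Pfun n x * Tb" using PD Tbpos by (intro mult_right_mono) auto
    ultimately show ?thesis by linarith
  qed
  have tle: "x j / (2 * Pfun n x) \<le> Tb" if "j \<in> S" for j
  proof -
    have "x j / (2 * Pfun n x) \<le> m / (2 * Pfun n x)" using mge[OF that] Ppos by (intro divide_right_mono) auto
    also have "\<dots> \<le> Tb" using mTb Ppos by (simp add: divide_le_eq mult.commute)
    finally show ?thesis .
  qed
  have "(\<Sum>j\<in>S. psi a (x j / (2 * Pfun n x))) \<le> (\<Sum>j\<in>S. (x j / (2 * Pfun n x)) / Tb * psi a Tb)"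
    using xge tle Ppos Tbpos Tb1 by (intro sum_mono psi_chord[OF a_pos L0']) (auto simp: L1 less_imp_le)
  also have "\<dots> = (\<Sum>j\<in>S. x j) / (2 * Pfun n x) / Tb * psi a Tb"
    by (simp add: sum_divide_distrib sum_distrib_right)
  also have "\<dots> = psi a Tb / (2 * Pfun n x * Tb)" using stoch S_def by simp
  also have "\<dots> \<le> 1"
  proof -
    define c :: real where "c = 21/50"
    have "c * Tb \<le> Tb * ln a" using L0 Tbpos unfolding c_def
      by (simp add: mult.commute mult_left_mono)
    hence e1: "exp (c * Tb) \<le> exp (Tb * ln a)" by simp
    have e2: "1 + c*Tb + (c*Tb)^2/2 \<le> exp (c * Tb)" using Tbpos unfolding c_def
      by (intro exp_lower_Taylor_quadratic) simp
    have e3: "a powr Tb = exp (Tb * ln a)" using a_pos by (simp add: powr_def)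
    have "1 + c*Tb + (c*Tb)^2/2 \<le> a powr Tb" using e1 e2 e3 by linarith
    hence "(1 - Tb) * (1 + c*Tb + (c*Tb)^2/2) \<le> (1 - Tb) * a powr Tb" using Tb1 by (intro mult_left_mono) auto
    hence "psi a Tb \<le> 1 - (1 - Tb) * (1 + c*Tb + (c*Tb)^2/2)" unfolding psi_def by simp
    also have "\<dots> = (29/50) * Tb + (1659/5000) * Tb^2 + (441/5000) * Tb^3" unfolding c_def
      by (simp add: field_simps eval_nat_numeral)
    also have "\<dots> \<le> m" using poly_main[OF m0 m1] unfolding Tb_def E_def D_def by simp
    finally have "psi a Tb \<le> 2 * Pfun n x * Tb" using mTb by linarith
    thus ?thesis using Ppos Tbpos by simp
  qed
  finally show ?thesis using part1 MaxS S_def by simp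
qed

end
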